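(* For finite $W\subset\mathbb{Z}^2$ let $D(W)$ denote the set of integer points in the Euclidean convex hull of $W$. Let $D_1=D(\{(-3,0),(0,3),(1,2),(-2,-1)\})$, $D_2=D(\{(1,2),(3,0),(2,-1),(0,1)\})$, $D_3=D(\{(2,-1),(0,-3),(-1,-2),(1,0)\})$, $D_4=D(\{(-1,-2),(-2,-1),(-1,0),(0,-1)\})$, $D_5=D(\{(5,0),(7,2),(8,1),(6,-1)\})$, $D_6=D(\{(7,2),(8,3),(9,2),(9,0)\})$, $D_7=D(\{(9,0),(9,-2),(8,-3),(7,-2)\})$, $D_8=D(\{(7,-2),(6,-1),(7,0),(8,-1)\})$, and let $X=\{(4,0)\}\cup\bigcup_{i=1}^8 D_i$. Then $$B'=\{(-3,0),(0,-3),(0,3),(8,-3),(8,3),(9,-2),(9,-1),(9,1),(9,2)\}$$ is a minimal freezing set for $(X,c_2)$.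
   Context: For $x\neq y$ in $\mathbb{Z}^2$, $x,y$ are $c_2$-adjacent if each coordinate differs by at most 1. $f:X\to X$ is $c_2$-continuous ($f\in C(X,c_2)$) if whenever $x,x'$ are $c_2$-adjacent, $f(x)$ and $f(x')$ are equal or $c_2$-adjacent. $\mathrm{Fix}(f)=\{x:f(x)=x\}$. $A\subset X$ is a freezing set for $(X,c_2)$ if every $f\in C(X,c_2)$ with $A\subset\mathrm{Fix}(f)$ is the identity on $X$; it is minimal if no proper subset of $A$ is a freezing set. *)

theory Defs
  imports "HOL-Analysis.Analysis"
begin

type_synonym pt = "int \<times> int"

definition c2_adj :: "pt \<Rightarrow> pt \<Rightarrow> bool" where
  "c2_adj x y \<longleftrightarrow> x \<noteq> y \<and> \<bar>fst x - fst y\<bar> \<le> 1 \<and> \<bar>snd x - snd y\<bar> \<le> 1"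

text \<open>Continuous self-maps of X (functions are total in HOL; only the values on X matter).\<close>
definition c2_continuous :: "pt set \<Rightarrow> (pt \<Rightarrow> pt) \<Rightarrow> bool" where
  "c2_continuous X f \<longleftrightarrow> f ` X \<subseteq> X \<and>
     (\<forall>x\<in>X. \<forall>y\<in>X. c2_adj x y \<longrightarrow> (f x = f y \<or> c2_adj (f x) (f y)))"

definition freezing_set :: "pt set \<Rightarrow> pt set \<Rightarrow> bool" where
  "freezing_set X A \<longleftrightarrow> A \<subseteq> X \<and>
     (\<forall>f. c2_continuous X f \<and> (\<forall>a\<in>A. f a = a) \<longrightarrow> (\<forall>x\<in>X. f x = x))"

definition minimal_freezing_set :: "pt set \<Rightarrow> pt set \<Rightarrow> bool" where
  "minimal_freezing_set X A \<longleftrightarrow> freezing_set X A \<and> (\<forall>B. B \<subset> A \<longrightarrow> \<not> freezing_set X B)"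

definition to_real :: "pt \<Rightarrow> real \<times> real" where
  "to_real p = (real_of_int (fst p), real_of_int (snd p))"

definition D :: "pt set \<Rightarrow> pt set" where
  "D W = {p. to_real p \<in> convex hull (to_real ` W)}"

definition Xex :: "pt set" where
  "Xex = {(4,0)}
     \<union> D {(-3,0),(0,3),(1,2),(-2,-1)}
     \<union> D {(1,2),(3,0),(2,-1),(0,1)}
     \<union> D {(2,-1),(0,-3),(-1,-2),(1,0)}
     \<union> D {(-1,-2),(-2,-1),(-1,0),(0,-1)}
     \<union> D {(5,0),(7,2),(8,1),(6,-1)}
     \<union> D {(7,2),(8,3),(9,2),(9,0)}
     \<union> D {(9,0),(9,-2),(8,-3),(7,-2)}
     \<union> D {(7,-2),(6,-1),(7,0),(8,-1)}"

end

theory Submission imports Defs begin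

lemma D_sub:
  assumes W: "\<forall>w\<in>W. \<forall>((a1,a2),c)\<in>set L. a1* fst w + a2* snd w \<le> (c::int)"
    and p: "p \<in> D W"
  shows "\<forall>((a1,a2),c)\<in>set L. a1* fst p + a2* snd p \<le> c"
proof -
  define T where "T = (\<Inter>l\<in>set L. {z::real\<times>real. inner (of_int (fst (fst l)), of_int (snd (fst l))) z \<le> of_int (snd l)})"
  have cT: "convex T" unfolding T_def
    by (intro convex_INT convex_halfspace_le)
  have "to_real ` W \<subseteq> T"
  proof
    fix z assume "z \<in> to_real ` W"
    then obtain w where w: "w \<in> W" "z = to_real w" by auto
    have "\<forall>l\<in>set L. real_of_int (fst (fst l)) * real_of_int (fst w) + real_of_int (snd (fst l)) * real_of_int (snd w) \<le> real_of_int (snd l)"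
    proof
      fix l assume l: "l \<in> set L"
      obtain a1 a2 c where l': "l = ((a1,a2),c)" by (metis prod.collapse)
      have "a1 * fst w + a2 * snd w \<le> c" using W w(1) l l' by fastforce
      hence "real_of_int (a1 * fst w + a2 * snd w) \<le> real_of_int c" by linarith
      thus "real_of_int (fst (fst l)) * real_of_int (fst w) + real_of_int (snd (fst l)) * real_of_int (snd w) \<le> real_of_int (snd l)"
        using l' by simp
    qed
    then show "z \<in> T" unfolding T_def using w(2) by (simp add: to_real_def)
  qed
  hence "convex hull (to_real ` W) \<subseteq> T" using cT by (rule hull_minimal)
  hence pt: "to_real p \<in> T" using p by (auto simp: D_def)
  show ?thesis
  proof (clarsimp)
    fix a1 a2 c assume l: "((a1,a2),c) \<in> set L"
    have "real_of_int a1 * real_of_int (fst p) + real_of_int a2 * real_of_int (snd p) \<le> real_of_int c"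
      using pt l by (force simp: T_def to_real_def)
    hence "real_of_int (a1* fst p + a2* snd p) \<le> real_of_int c" by simp
    thus "a1* fst p + a2* snd p \<le> c" by linarith
  qed
qed

lemma in_tri:
  assumes "{a,b,c} \<subseteq> W" "0\<le>u" "0\<le>v" "0\<le>w" "u+v+w=1"
    "real_of_int (fst p) = u * real_of_int (fst a) + v * real_of_int (fst b) + w * real_of_int (fst c)"
    "real_of_int (snd p) = u * real_of_int (snd a) + v * real_of_int (snd b) + w * real_of_int (snd c)"
  shows "p \<in> D W"
proof -
  have "to_real p = u *\<^sub>R to_real a + v *\<^sub>R to_real b + w *\<^sub>R to_real c"
    using assms(6,7) by (simp add: to_real_def)
  hence "to_real p \<in> convex hull {to_real a, to_real b, to_real c}"
    using assms(2-5) by (auto simp: convex_hull_3)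
  moreover have "convex hull {to_real a, to_real b, to_real c} \<subseteq> convex hull (to_real ` W)"
    by (rule hull_mono) (use assms(1) in auto)
  ultimately show ?thesis by (auto simp: D_def)
qed

lemma rng: "lo \<le> (x::int) \<Longrightarrow> x \<le> hi \<Longrightarrow> x \<in> set [lo..hi]" by simp

lemma D0_sub: "p \<in> D {(-3,0),(0,3),(1,2),(-2,-1)} \<Longrightarrow> p \<in> {(-3,0),(-2,-1),(-2,0),(-2,1),(-1,0),(-1,1),(-1,2),(0,1),(0,2),(0,3),(1,2)}"
proof -
  assume a: "p \<in> D {(-3,0),(0,3),(1,2),(-2,-1)}"
  obtain x y where p: "p = (x,y)" by (cases p)
  from D_sub[OF _ a, of "[((-3,3),9),((-1,-1),3),((1,1),3),((3,-3),-3)]"]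
  have h: "(-3) * x + (3) * y \<le> 9 \<and> (-1) * x + (-1) * y \<le> 3 \<and> (1) * x + (1) * y \<le> 3 \<and> (3) * x + (-3) * y \<le> -3" by (simp add: p)
  have "x \<in> set [-3..1]" by (rule rng) (use h in linarith)+
  moreover have "y \<in> set [-1..3]" by (rule rng) (use h in linarith)+
  ultimately show ?thesis using h unfolding p by (simp add: upto.simps) (elim disjE; simp)
qed

lemma D0_eq: "D {(-3,0),(0,3),(1,2),(-2,-1)} = {(-3,0),(-2,-1),(-2,0),(-2,1),(-1,0),(-1,1),(-1,2),(0,1),(0,2),(0,3),(1,2)}"
proof -
  have h0: "(-3,0) \<in> D {(-3,0),(0,3),(1,2),(-2,-1)}" by (rule in_tri[of "(-3,0)" "(0,3)" "(1,2)" _ "(1)" "(0)" "(0)"]) simp_all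
  have h1: "(-2,-1) \<in> D {(-3,0),(0,3),(1,2),(-2,-1)}" by (rule in_tri[of "(-3,0)" "(0,3)" "(-2,-1)" _ "(0)" "(0)" "(1)"]) simp_all
  have h2: "(-2,0) \<in> D {(-3,0),(0,3),(1,2),(-2,-1)}" by (rule in_tri[of "(-3,0)" "(0,3)" "(-2,-1)" _ "(1/3)" "(1/6)" "(1/2)"]) simp_all
  have h3: "(-2,1) \<in> D {(-3,0),(0,3),(1,2),(-2,-1)}" by (rule in_tri[of "(-3,0)" "(0,3)" "(1,2)" _ "(2/3)" "(1/3)" "(0)"]) simp_all
  have h4: "(-1,0) \<in> D {(-3,0),(0,3),(1,2),(-2,-1)}" by (rule in_tri[of "(-3,0)" "(1,2)" "(-2,-1)" _ "(0)" "(1/3)" "(2/3)"]) simp_all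
  have h5: "(-1,1) \<in> D {(-3,0),(0,3),(1,2),(-2,-1)}" by (rule in_tri[of "(-3,0)" "(0,3)" "(1,2)" _ "(1/2)" "(0)" "(1/2)"]) simp_all
  have h6: "(-1,2) \<in> D {(-3,0),(0,3),(1,2),(-2,-1)}" by (rule in_tri[of "(-3,0)" "(0,3)" "(1,2)" _ "(1/3)" "(2/3)" "(0)"]) simp_all
  have h7: "(0,1) \<in> D {(-3,0),(0,3),(1,2),(-2,-1)}" by (rule in_tri[of "(-3,0)" "(1,2)" "(-2,-1)" _ "(0)" "(2/3)" "(1/3)"]) simp_all
  have h8: "(0,2) \<in> D {(-3,0),(0,3),(1,2),(-2,-1)}" by (rule in_tri[of "(-3,0)" "(0,3)" "(1,2)" _ "(1/6)" "(1/3)" "(1/2)"]) simp_all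
  have h9: "(0,3) \<in> D {(-3,0),(0,3),(1,2),(-2,-1)}" by (rule in_tri[of "(-3,0)" "(0,3)" "(1,2)" _ "(0)" "(1)" "(0)"]) simp_all
  have h10: "(1,2) \<in> D {(-3,0),(0,3),(1,2),(-2,-1)}" by (rule in_tri[of "(-3,0)" "(0,3)" "(1,2)" _ "(0)" "(0)" "(1)"]) simp_all
  show ?thesis by (rule equalityI, rule subsetI, erule D0_sub) (simp only: insert_subset empty_subsetI h0 h1 h2 h3 h4 h5 h6 h7 h8 h9 h10 simp_thms)
qed

lemma D1_sub: "p \<in> D {(1,2),(3,0),(2,-1),(0,1)} \<Longrightarrow> p \<in> {(0,1),(1,0),(1,1),(1,2),(2,-1),(2,0),(2,1),(3,0)}"
proof -
  assume a: "p \<in> D {(1,2),(3,0),(2,-1),(0,1)}"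
  obtain x y where p: "p = (x,y)" by (cases p)
  from D_sub[OF _ a, of "[((2,2),6),((-1,1),1),((1,-1),3),((-2,-2),-2)]"]
  have h: "(2) * x + (2) * y \<le> 6 \<and> (-1) * x + (1) * y \<le> 1 \<and> (1) * x + (-1) * y \<le> 3 \<and> (-2) * x + (-2) * y \<le> -2" by (simp add: p)
  have "x \<in> set [0..3]" by (rule rng) (use h in linarith)+
  moreover have "y \<in> set [-1..2]" by (rule rng) (use h in linarith)+
  ultimately show ?thesis using h unfolding p by (simp add: upto.simps) (elim disjE; simp)
qed

lemma D1_eq: "D {(1,2),(3,0),(2,-1),(0,1)} = {(0,1),(1,0),(1,1),(1,2),(2,-1),(2,0),(2,1),(3,0)}"
proof -
  have h0: "(0,1) \<in> D {(1,2),(3,0),(2,-1),(0,1)}" by (rule in_tri[of "(1,2)" "(3,0)" "(0,1)" _ "(0)" "(0)" "(1)"]) simp_all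
  have h1: "(1,0) \<in> D {(1,2),(3,0),(2,-1),(0,1)}" by (rule in_tri[of "(1,2)" "(2,-1)" "(0,1)" _ "(0)" "(1/2)" "(1/2)"]) simp_all
  have h2: "(1,1) \<in> D {(1,2),(3,0),(2,-1),(0,1)}" by (rule in_tri[of "(1,2)" "(3,0)" "(0,1)" _ "(1/4)" "(1/4)" "(1/2)"]) simp_all
  have h3: "(1,2) \<in> D {(1,2),(3,0),(2,-1),(0,1)}" by (rule in_tri[of "(1,2)" "(3,0)" "(2,-1)" _ "(1)" "(0)" "(0)"]) simp_all
  have h4: "(2,-1) \<in> D {(1,2),(3,0),(2,-1),(0,1)}" by (rule in_tri[of "(1,2)" "(3,0)" "(2,-1)" _ "(0)" "(0)" "(1)"]) simp_all
  have h5: "(2,0) \<in> D {(1,2),(3,0),(2,-1),(0,1)}" by (rule in_tri[of "(1,2)" "(3,0)" "(2,-1)" _ "(1/4)" "(1/4)" "(1/2)"]) simp_all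
  have h6: "(2,1) \<in> D {(1,2),(3,0),(2,-1),(0,1)}" by (rule in_tri[of "(1,2)" "(3,0)" "(2,-1)" _ "(1/2)" "(1/2)" "(0)"]) simp_all
  have h7: "(3,0) \<in> D {(1,2),(3,0),(2,-1),(0,1)}" by (rule in_tri[of "(1,2)" "(3,0)" "(2,-1)" _ "(0)" "(1)" "(0)"]) simp_all
  show ?thesis by (rule equalityI, rule subsetI, erule D1_sub) (simp only: insert_subset empty_subsetI h0 h1 h2 h3 h4 h5 h6 h7 simp_thms)
qed

lemma D2_sub: "p \<in> D {(2,-1),(0,-3),(-1,-2),(1,0)} \<Longrightarrow> p \<in> {(-1,-2),(0,-3),(0,-2),(0,-1),(1,-2),(1,-1),(1,0),(2,-1)}"
proof -
  assume a: "p \<in> D {(2,-1),(0,-3),(-1,-2),(1,0)}"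
  obtain x y where p: "p = (x,y)" by (cases p)
  from D_sub[OF _ a, of "[((2,-2),6),((1,1),1),((-1,-1),3),((-2,2),-2)]"]
  have h: "(2) * x + (-2) * y \<le> 6 \<and> (1) * x + (1) * y \<le> 1 \<and> (-1) * x + (-1) * y \<le> 3 \<and> (-2) * x + (2) * y \<le> -2" by (simp add: p)
  have "x \<in> set [-1..2]" by (rule rng) (use h in linarith)+
  moreover have "y \<in> set [-3..0]" by (rule rng) (use h in linarith)+
  ultimately show ?thesis using h unfolding p by (simp add: upto.simps) (elim disjE; simp)
qed

lemma D2_eq: "D {(2,-1),(0,-3),(-1,-2),(1,0)} = {(-1,-2),(0,-3),(0,-2),(0,-1),(1,-2),(1,-1),(1,0),(2,-1)}"
proof -
  have h0: "(-1,-2) \<in> D {(2,-1),(0,-3),(-1,-2),(1,0)}" by (rule in_tri[of "(2,-1)" "(0,-3)" "(-1,-2)" _ "(0)" "(0)" "(1)"]) simp_all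
  have h1: "(0,-3) \<in> D {(2,-1),(0,-3),(-1,-2),(1,0)}" by (rule in_tri[of "(2,-1)" "(0,-3)" "(-1,-2)" _ "(0)" "(1)" "(0)"]) simp_all
  have h2: "(0,-2) \<in> D {(2,-1),(0,-3),(-1,-2),(1,0)}" by (rule in_tri[of "(2,-1)" "(0,-3)" "(-1,-2)" _ "(1/4)" "(1/4)" "(1/2)"]) simp_all
  have h3: "(0,-1) \<in> D {(2,-1),(0,-3),(-1,-2),(1,0)}" by (rule in_tri[of "(2,-1)" "(-1,-2)" "(1,0)" _ "(0)" "(1/2)" "(1/2)"]) simp_all
  have h4: "(1,-2) \<in> D {(2,-1),(0,-3),(-1,-2),(1,0)}" by (rule in_tri[of "(2,-1)" "(0,-3)" "(-1,-2)" _ "(1/2)" "(1/2)" "(0)"]) simp_all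
  have h5: "(1,-1) \<in> D {(2,-1),(0,-3),(-1,-2),(1,0)}" by (rule in_tri[of "(2,-1)" "(0,-3)" "(1,0)" _ "(1/4)" "(1/4)" "(1/2)"]) simp_all
  have h6: "(1,0) \<in> D {(2,-1),(0,-3),(-1,-2),(1,0)}" by (rule in_tri[of "(2,-1)" "(0,-3)" "(1,0)" _ "(0)" "(0)" "(1)"]) simp_all
  have h7: "(2,-1) \<in> D {(2,-1),(0,-3),(-1,-2),(1,0)}" by (rule in_tri[of "(2,-1)" "(0,-3)" "(-1,-2)" _ "(1)" "(0)" "(0)"]) simp_all
  show ?thesis by (rule equalityI, rule subsetI, erule D2_sub) (simp only: insert_subset empty_subsetI h0 h1 h2 h3 h4 h5 h6 h7 simp_thms)
qed

lemma D3_sub: "p \<in> D {(-1,-2),(-2,-1),(-1,0),(0,-1)} \<Longrightarrow> p \<in> {(-2,-1),(-1,-2),(-1,-1),(-1,0),(0,-1)}"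
proof -
  assume a: "p \<in> D {(-1,-2),(-2,-1),(-1,0),(0,-1)}"
  obtain x y where p: "p = (x,y)" by (cases p)
  from D_sub[OF _ a, of "[((-1,-1),3),((1,-1),1),((-1,1),1),((1,1),-1)]"]
  have h: "(-1) * x + (-1) * y \<le> 3 \<and> (1) * x + (-1) * y \<le> 1 \<and> (-1) * x + (1) * y \<le> 1 \<and> (1) * x + (1) * y \<le> -1" by (simp add: p)
  have "x \<in> set [-2..0]" by (rule rng) (use h in linarith)+
  moreover have "y \<in> set [-2..0]" by (rule rng) (use h in linarith)+
  ultimately show ?thesis using h unfolding p by (simp add: upto.simps) (elim disjE; simp)
qed

lemma D3_eq: "D {(-1,-2),(-2,-1),(-1,0),(0,-1)} = {(-2,-1),(-1,-2),(-1,-1),(-1,0),(0,-1)}"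
proof -
  have h0: "(-2,-1) \<in> D {(-1,-2),(-2,-1),(-1,0),(0,-1)}" by (rule in_tri[of "(-1,-2)" "(-2,-1)" "(-1,0)" _ "(0)" "(1)" "(0)"]) simp_all
  have h1: "(-1,-2) \<in> D {(-1,-2),(-2,-1),(-1,0),(0,-1)}" by (rule in_tri[of "(-1,-2)" "(-2,-1)" "(-1,0)" _ "(1)" "(0)" "(0)"]) simp_all
  have h2: "(-1,-1) \<in> D {(-1,-2),(-2,-1),(-1,0),(0,-1)}" by (rule in_tri[of "(-1,-2)" "(-2,-1)" "(-1,0)" _ "(1/2)" "(0)" "(1/2)"]) simp_all
  have h3: "(-1,0) \<in> D {(-1,-2),(-2,-1),(-1,0),(0,-1)}" by (rule in_tri[of "(-1,-2)" "(-2,-1)" "(-1,0)" _ "(0)" "(0)" "(1)"]) simp_all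
  have h4: "(0,-1) \<in> D {(-1,-2),(-2,-1),(-1,0),(0,-1)}" by (rule in_tri[of "(-1,-2)" "(-2,-1)" "(0,-1)" _ "(0)" "(0)" "(1)"]) simp_all
  show ?thesis by (rule equalityI, rule subsetI, erule D3_sub) (simp only: insert_subset empty_subsetI h0 h1 h2 h3 h4 simp_thms)
qed

lemma D4_sub: "p \<in> D {(5,0),(7,2),(8,1),(6,-1)} \<Longrightarrow> p \<in> {(5,0),(6,-1),(6,0),(6,1),(7,0),(7,1),(7,2),(8,1)}"
proof -
  assume a: "p \<in> D {(5,0),(7,2),(8,1),(6,-1)}"
  obtain x y where p: "p = (x,y)" by (cases p)
  from D_sub[OF _ a, of "[((-2,2),-10),((-1,-1),-5),((1,1),9),((2,-2),14)]"]
  have h: "(-2) * x + (2) * y \<le> -10 \<and> (-1) * x + (-1) * y \<le> -5 \<and> (1) * x + (1) * y \<le> 9 \<and> (2) * x + (-2) * y \<le> 14" by (simp add: p)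
  have "x \<in> set [5..8]" by (rule rng) (use h in linarith)+
  moreover have "y \<in> set [-1..2]" by (rule rng) (use h in linarith)+
  ultimately show ?thesis using h unfolding p by (simp add: upto.simps) (elim disjE; simp)
qed

lemma D4_eq: "D {(5,0),(7,2),(8,1),(6,-1)} = {(5,0),(6,-1),(6,0),(6,1),(7,0),(7,1),(7,2),(8,1)}"
proof -
  have h0: "(5,0) \<in> D {(5,0),(7,2),(8,1),(6,-1)}" by (rule in_tri[of "(5,0)" "(7,2)" "(8,1)" _ "(1)" "(0)" "(0)"]) simp_all
  have h1: "(6,-1) \<in> D {(5,0),(7,2),(8,1),(6,-1)}" by (rule in_tri[of "(5,0)" "(7,2)" "(6,-1)" _ "(0)" "(0)" "(1)"]) simp_all
  have h2: "(6,0) \<in> D {(5,0),(7,2),(8,1),(6,-1)}" by (rule in_tri[of "(5,0)" "(7,2)" "(6,-1)" _ "(1/4)" "(1/4)" "(1/2)"]) simp_all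
  have h3: "(6,1) \<in> D {(5,0),(7,2),(8,1),(6,-1)}" by (rule in_tri[of "(5,0)" "(7,2)" "(8,1)" _ "(1/2)" "(1/2)" "(0)"]) simp_all
  have h4: "(7,0) \<in> D {(5,0),(7,2),(8,1),(6,-1)}" by (rule in_tri[of "(5,0)" "(8,1)" "(6,-1)" _ "(0)" "(1/2)" "(1/2)"]) simp_all
  have h5: "(7,1) \<in> D {(5,0),(7,2),(8,1),(6,-1)}" by (rule in_tri[of "(5,0)" "(7,2)" "(8,1)" _ "(1/4)" "(1/4)" "(1/2)"]) simp_all
  have h6: "(7,2) \<in> D {(5,0),(7,2),(8,1),(6,-1)}" by (rule in_tri[of "(5,0)" "(7,2)" "(8,1)" _ "(0)" "(1)" "(0)"]) simp_all
  have h7: "(8,1) \<in> D {(5,0),(7,2),(8,1),(6,-1)}" by (rule in_tri[of "(5,0)" "(7,2)" "(8,1)" _ "(0)" "(0)" "(1)"]) simp_all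
  show ?thesis by (rule equalityI, rule subsetI, erule D4_sub) (simp only: insert_subset empty_subsetI h0 h1 h2 h3 h4 h5 h6 h7 simp_thms)
qed

lemma D5_sub: "p \<in> D {(7,2),(8,3),(9,2),(9,0)} \<Longrightarrow> p \<in> {(7,2),(8,1),(8,2),(8,3),(9,0),(9,1),(9,2)}"
proof -
  assume a: "p \<in> D {(7,2),(8,3),(9,2),(9,0)}"
  obtain x y where p: "p = (x,y)" by (cases p)
  from D_sub[OF _ a, of "[((-1,1),-5),((-2,-2),-18),((1,1),11),((2,0),18)]"]
  have h: "(-1) * x + (1) * y \<le> -5 \<and> (-2) * x + (-2) * y \<le> -18 \<and> (1) * x + (1) * y \<le> 11 \<and> (2) * x + (0) * y \<le> 18" by (simp add: p)
  have "x \<in> set [7..9]" by (rule rng) (use h in linarith)+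
  moreover have "y \<in> set [0..3]" by (rule rng) (use h in linarith)+
  ultimately show ?thesis using h unfolding p by (simp add: upto.simps) (elim disjE; simp)
qed

lemma D5_eq: "D {(7,2),(8,3),(9,2),(9,0)} = {(7,2),(8,1),(8,2),(8,3),(9,0),(9,1),(9,2)}"
proof -
  have h0: "(7,2) \<in> D {(7,2),(8,3),(9,2),(9,0)}" by (rule in_tri[of "(7,2)" "(8,3)" "(9,2)" _ "(1)" "(0)" "(0)"]) simp_all
  have h1: "(8,1) \<in> D {(7,2),(8,3),(9,2),(9,0)}" by (rule in_tri[of "(7,2)" "(8,3)" "(9,0)" _ "(1/2)" "(0)" "(1/2)"]) simp_all
  have h2: "(8,2) \<in> D {(7,2),(8,3),(9,2),(9,0)}" by (rule in_tri[of "(7,2)" "(8,3)" "(9,2)" _ "(1/2)" "(0)" "(1/2)"]) simp_all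
  have h3: "(8,3) \<in> D {(7,2),(8,3),(9,2),(9,0)}" by (rule in_tri[of "(7,2)" "(8,3)" "(9,2)" _ "(0)" "(1)" "(0)"]) simp_all
  have h4: "(9,0) \<in> D {(7,2),(8,3),(9,2),(9,0)}" by (rule in_tri[of "(7,2)" "(8,3)" "(9,0)" _ "(0)" "(0)" "(1)"]) simp_all
  have h5: "(9,1) \<in> D {(7,2),(8,3),(9,2),(9,0)}" by (rule in_tri[of "(7,2)" "(9,2)" "(9,0)" _ "(0)" "(1/2)" "(1/2)"]) simp_all
  have h6: "(9,2) \<in> D {(7,2),(8,3),(9,2),(9,0)}" by (rule in_tri[of "(7,2)" "(8,3)" "(9,2)" _ "(0)" "(0)" "(1)"]) simp_all
  show ?thesis by (rule equalityI, rule subsetI, erule D5_sub) (simp only: insert_subset empty_subsetI h0 h1 h2 h3 h4 h5 h6 simp_thms)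
qed

lemma D6_sub: "p \<in> D {(9,0),(9,-2),(8,-3),(7,-2)} \<Longrightarrow> p \<in> {(7,-2),(8,-3),(8,-2),(8,-1),(9,-2),(9,-1),(9,0)}"
proof -
  assume a: "p \<in> D {(9,0),(9,-2),(8,-3),(7,-2)}"
  obtain x y where p: "p = (x,y)" by (cases p)
  from D_sub[OF _ a, of "[((2,0),18),((-2,2),-18),((1,-1),11),((-1,-1),-5)]"]
  have h: "(2) * x + (0) * y \<le> 18 \<and> (-2) * x + (2) * y \<le> -18 \<and> (1) * x + (-1) * y \<le> 11 \<and> (-1) * x + (-1) * y \<le> -5" by (simp add: p)
  have "x \<in> set [7..9]" by (rule rng) (use h in linarith)+
  moreover have "y \<in> set [-3..0]" by (rule rng) (use h in linarith)+
  ultimately show ?thesis using h unfolding p by (simp add: upto.simps) (elim disjE; simp)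
qed

lemma D6_eq: "D {(9,0),(9,-2),(8,-3),(7,-2)} = {(7,-2),(8,-3),(8,-2),(8,-1),(9,-2),(9,-1),(9,0)}"
proof -
  have h0: "(7,-2) \<in> D {(9,0),(9,-2),(8,-3),(7,-2)}" by (rule in_tri[of "(9,0)" "(9,-2)" "(7,-2)" _ "(0)" "(0)" "(1)"]) simp_all
  have h1: "(8,-3) \<in> D {(9,0),(9,-2),(8,-3),(7,-2)}" by (rule in_tri[of "(9,0)" "(9,-2)" "(8,-3)" _ "(0)" "(0)" "(1)"]) simp_all
  have h2: "(8,-2) \<in> D {(9,0),(9,-2),(8,-3),(7,-2)}" by (rule in_tri[of "(9,0)" "(9,-2)" "(7,-2)" _ "(0)" "(1/2)" "(1/2)"]) simp_all
  have h3: "(8,-1) \<in> D {(9,0),(9,-2),(8,-3),(7,-2)}" by (rule in_tri[of "(9,0)" "(9,-2)" "(7,-2)" _ "(1/2)" "(0)" "(1/2)"]) simp_all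
  have h4: "(9,-2) \<in> D {(9,0),(9,-2),(8,-3),(7,-2)}" by (rule in_tri[of "(9,0)" "(9,-2)" "(8,-3)" _ "(0)" "(1)" "(0)"]) simp_all
  have h5: "(9,-1) \<in> D {(9,0),(9,-2),(8,-3),(7,-2)}" by (rule in_tri[of "(9,0)" "(9,-2)" "(8,-3)" _ "(1/2)" "(1/2)" "(0)"]) simp_all
  have h6: "(9,0) \<in> D {(9,0),(9,-2),(8,-3),(7,-2)}" by (rule in_tri[of "(9,0)" "(9,-2)" "(8,-3)" _ "(1)" "(0)" "(0)"]) simp_all
  show ?thesis by (rule equalityI, rule subsetI, erule D6_sub) (simp only: insert_subset empty_subsetI h0 h1 h2 h3 h4 h5 h6 simp_thms)
qed

lemma D7_sub: "p \<in> D {(7,-2),(6,-1),(7,0),(8,-1)} \<Longrightarrow> p \<in> {(6,-1),(7,-2),(7,-1),(7,0),(8,-1)}"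
proof -
  assume a: "p \<in> D {(7,-2),(6,-1),(7,0),(8,-1)}"
  obtain x y where p: "p = (x,y)" by (cases p)
  from D_sub[OF _ a, of "[((-1,-1),-5),((1,-1),9),((-1,1),-7),((1,1),7)]"]
  have h: "(-1) * x + (-1) * y \<le> -5 \<and> (1) * x + (-1) * y \<le> 9 \<and> (-1) * x + (1) * y \<le> -7 \<and> (1) * x + (1) * y \<le> 7" by (simp add: p)
  have "x \<in> set [6..8]" by (rule rng) (use h in linarith)+
  moreover have "y \<in> set [-2..0]" by (rule rng) (use h in linarith)+
  ultimately show ?thesis using h unfolding p by (simp add: upto.simps) (elim disjE; simp)
qed

lemma D7_eq: "D {(7,-2),(6,-1),(7,0),(8,-1)} = {(6,-1),(7,-2),(7,-1),(7,0),(8,-1)}"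
proof -
  have h0: "(6,-1) \<in> D {(7,-2),(6,-1),(7,0),(8,-1)}" by (rule in_tri[of "(7,-2)" "(6,-1)" "(7,0)" _ "(0)" "(1)" "(0)"]) simp_all
  have h1: "(7,-2) \<in> D {(7,-2),(6,-1),(7,0),(8,-1)}" by (rule in_tri[of "(7,-2)" "(6,-1)" "(7,0)" _ "(1)" "(0)" "(0)"]) simp_all
  have h2: "(7,-1) \<in> D {(7,-2),(6,-1),(7,0),(8,-1)}" by (rule in_tri[of "(7,-2)" "(6,-1)" "(7,0)" _ "(1/2)" "(0)" "(1/2)"]) simp_all
  have h3: "(7,0) \<in> D {(7,-2),(6,-1),(7,0),(8,-1)}" by (rule in_tri[of "(7,-2)" "(6,-1)" "(7,0)" _ "(0)" "(0)" "(1)"]) simp_all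
  have h4: "(8,-1) \<in> D {(7,-2),(6,-1),(7,0),(8,-1)}" by (rule in_tri[of "(7,-2)" "(6,-1)" "(8,-1)" _ "(0)" "(0)" "(1)"]) simp_all
  show ?thesis by (rule equalityI, rule subsetI, erule D7_sub) (simp only: insert_subset empty_subsetI h0 h1 h2 h3 h4 simp_thms)
qed

definition Xl :: "pt set" where "Xl = {(-3,0),(-2,-1),(-2,0),(-2,1),(-1,-2),(-1,-1),(-1,0),(-1,1),(-1,2),(0,-3),(0,-2),(0,-1),(0,1),(0,2),(0,3),(1,-2),(1,-1),(1,0),(1,1),(1,2),(2,-1),(2,0),(2,1),(3,0),(4,0),(5,0),(6,-1),(6,0),(6,1),(7,-2),(7,-1),(7,0),(7,1),(7,2),(8,-3),(8,-2),(8,-1),(8,1),(8,2),(8,3),(9,-2),(9,-1),(9,0),(9,1),(9,2)}"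

lemma X_eq: "Xex = Xl"
  unfolding Xex_def Xl_def D0_eq D1_eq D2_eq D3_eq D4_eq D5_eq D6_eq D7_eq by auto

lemma step:
  assumes "c2_continuous X f" "p \<in> X" "q \<in> X" "c2_adj p q" "f q \<in> Sq" "f p \<in> Sp"
    "\<forall>u\<in>Sp. \<forall>v\<in>Sq. (u = v \<or> c2_adj u v) \<longrightarrow> u \<in> Snew"
  shows "f p \<in> Snew"
  using assms unfolding c2_continuous_def by blast

lemma freeze:
  assumes cont: "c2_continuous Xl f" and fixB: "\<forall>a\<in>{(-3,0),(0,-3),(0,3),(8,-3),(8,3),(9,-2),(9,-1),(9,1),(9,2)}. f a = a"
  shows "\<forall>x\<in>Xl. f x = x"
proof -
  have inX: "\<And>p. p \<in> Xl \<Longrightarrow> f p \<in> Xl" using cont unfolding c2_continuous_def by blast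
  have fix0: "f (-3,0) \<in> {(-3,0)}" using fixB by simp
  have fix1: "f (0,-3) \<in> {(0,-3)}" using fixB by simp
  have fix2: "f (0,3) \<in> {(0,3)}" using fixB by simp
  have fix3: "f (8,-3) \<in> {(8,-3)}" using fixB by simp
  have fix4: "f (8,3) \<in> {(8,3)}" using fixB by simp
  have fix5: "f (9,-2) \<in> {(9,-2)}" using fixB by simp
  have fix6: "f (9,-1) \<in> {(9,-1)}" using fixB by simp
  have fix7: "f (9,1) \<in> {(9,1)}" using fixB by simp
  have fix8: "f (9,2) \<in> {(9,2)}" using fixB by simp
  have s0: "f (-2,-1) \<in> {(-3,0),(-2,-1),(-2,0),(-2,1)}" by (rule step[OF cont _ _ _ fix0 inX[of "(-2,-1)"]]) (simp_all add: Xl_def c2_adj_def)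
  have s1: "f (-2,0) \<in> {(-3,0),(-2,-1),(-2,0),(-2,1)}" by (rule step[OF cont _ _ _ fix0 inX[of "(-2,0)"]]) (simp_all add: Xl_def c2_adj_def)
  have s2: "f (-2,1) \<in> {(-3,0),(-2,-1),(-2,0),(-2,1)}" by (rule step[OF cont _ _ _ fix0 inX[of "(-2,1)"]]) (simp_all add: Xl_def c2_adj_def)
  have s3: "f (-1,-2) \<in> {(-1,-2),(0,-3),(0,-2),(1,-2)}" by (rule step[OF cont _ _ _ fix1 inX[of "(-1,-2)"]]) (simp_all add: Xl_def c2_adj_def)
  have s4: "f (-1,-2) \<in> {(-1,-2)}" by (rule step[OF cont _ _ _ s0 s3]) (simp_all add: Xl_def c2_adj_def)
  have s5: "f (-1,-1) \<in> {(-2,-1),(-1,-2),(-1,-1),(0,-3),(0,-2),(0,-1)}" by (rule step[OF cont _ _ _ s4 inX[of "(-1,-1)"]]) (simp_all add: Xl_def c2_adj_def)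
  have s6: "f (-1,-1) \<in> {(-2,-1),(-1,-2),(-1,-1)}" by (rule step[OF cont _ _ _ s0 s5]) (simp_all add: Xl_def c2_adj_def)
  have s7: "f (-1,0) \<in> {(-3,0),(-2,-1),(-2,0),(-1,-2),(-1,-1),(-1,0),(0,-3),(0,-2),(0,-1)}" by (rule step[OF cont _ _ _ s6 inX[of "(-1,0)"]]) (simp_all add: Xl_def c2_adj_def)
  have s8: "f (-1,0) \<in> {(-3,0),(-2,-1),(-2,0),(-1,-2),(-1,-1),(-1,0)}" by (rule step[OF cont _ _ _ s0 s7]) (simp_all add: Xl_def c2_adj_def)
  have s9: "f (-1,1) \<in> {(-3,0),(-2,-1),(-2,0),(-2,1),(-1,-2),(-1,-1),(-1,0),(-1,1),(-1,2)}" by (rule step[OF cont _ _ _ s1 inX[of "(-1,1)"]]) (simp_all add: Xl_def c2_adj_def)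
  have s10: "f (-1,1) \<in> {(-3,0),(-2,-1),(-2,0),(-2,1),(-1,-2),(-1,-1),(-1,0),(-1,1)}" by (rule step[OF cont _ _ _ s8 s9]) (simp_all add: Xl_def c2_adj_def)
  have s11: "f (-1,2) \<in> {(-1,2),(0,2),(0,3),(1,2)}" by (rule step[OF cont _ _ _ fix2 inX[of "(-1,2)"]]) (simp_all add: Xl_def c2_adj_def)
  have s12: "f (-1,2) \<in> {(-1,2)}" by (rule step[OF cont _ _ _ s2 s11]) (simp_all add: Xl_def c2_adj_def)
  have s13: "f (0,-2) \<in> {(-2,-1),(-1,-2),(-1,-1),(0,-3),(0,-2),(0,-1)}" by (rule step[OF cont _ _ _ s4 inX[of "(0,-2)"]]) (simp_all add: Xl_def c2_adj_def)
  have s14: "f (0,-2) \<in> {(-1,-2),(0,-3),(0,-2)}" by (rule step[OF cont _ _ _ fix1 s13]) (simp_all add: Xl_def c2_adj_def)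
  have s15: "f (0,-1) \<in> {(-2,-1),(-1,-2),(-1,-1),(0,-3),(0,-2),(0,-1)}" by (rule step[OF cont _ _ _ s4 inX[of "(0,-1)"]]) (simp_all add: Xl_def c2_adj_def)
  have s16: "f (0,1) \<in> {(-2,1),(-1,1),(-1,2),(0,1),(0,2),(0,3)}" by (rule step[OF cont _ _ _ s12 inX[of "(0,1)"]]) (simp_all add: Xl_def c2_adj_def)
  have s17: "f (0,1) \<in> {(-2,1),(-1,1),(0,1)}" by (rule step[OF cont _ _ _ s8 s16]) (simp_all add: Xl_def c2_adj_def)
  have s18: "f (0,2) \<in> {(-2,1),(-1,1),(-1,2),(0,1),(0,2),(0,3)}" by (rule step[OF cont _ _ _ s12 inX[of "(0,2)"]]) (simp_all add: Xl_def c2_adj_def)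
  have s19: "f (0,2) \<in> {(-1,2),(0,2),(0,3)}" by (rule step[OF cont _ _ _ fix2 s18]) (simp_all add: Xl_def c2_adj_def)
  have s20: "f (0,2) \<in> {(-1,2),(0,2)}" by (rule step[OF cont _ _ _ s17 s19]) (simp_all add: Xl_def c2_adj_def)
  have s21: "f (1,-2) \<in> {(-1,-2),(0,-3),(0,-2),(1,-2)}" by (rule step[OF cont _ _ _ fix1 inX[of "(1,-2)"]]) (simp_all add: Xl_def c2_adj_def)
  have s22: "f (1,-1) \<in> {(-2,-1),(-1,-2),(-1,-1),(0,-3),(0,-2),(0,-1),(1,-2),(1,-1)}" by (rule step[OF cont _ _ _ s14 inX[of "(1,-1)"]]) (simp_all add: Xl_def c2_adj_def)
  have s23: "f (1,0) \<in> {(-3,0),(-2,0),(-2,1),(-1,0),(-1,1),(-1,2),(0,1),(0,2),(1,0),(1,1),(1,2)}" by (rule step[OF cont _ _ _ s17 inX[of "(1,0)"]]) (simp_all add: Xl_def c2_adj_def)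
  have s24: "f (1,0) \<in> {(-3,0),(-2,0),(-1,0),(1,0)}" by (rule step[OF cont _ _ _ s15 s23]) (simp_all add: Xl_def c2_adj_def)
  have s25: "f (1,1) \<in> {(-2,1),(-1,1),(-1,2),(0,1),(0,2),(0,3),(1,1),(1,2)}" by (rule step[OF cont _ _ _ s20 inX[of "(1,1)"]]) (simp_all add: Xl_def c2_adj_def)
  have s26: "f (1,1) \<in> {(-2,1),(-1,1),(-1,2),(0,1),(0,2),(1,1),(1,2)}" by (rule step[OF cont _ _ _ s17 s25]) (simp_all add: Xl_def c2_adj_def)
  have s27: "f (1,1) \<in> {(-2,1),(-1,1),(0,1),(1,1)}" by (rule step[OF cont _ _ _ s24 s26]) (simp_all add: Xl_def c2_adj_def)
  have s28: "f (1,2) \<in> {(-1,2),(0,2),(0,3),(1,2)}" by (rule step[OF cont _ _ _ fix2 inX[of "(1,2)"]]) (simp_all add: Xl_def c2_adj_def)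
  have s29: "f (1,2) \<in> {(-1,2),(0,2),(1,2)}" by (rule step[OF cont _ _ _ s17 s28]) (simp_all add: Xl_def c2_adj_def)
  have s30: "f (2,-1) \<in> {(-2,-1),(-1,-2),(-1,-1),(0,-3),(0,-2),(0,-1),(1,-2),(1,-1),(2,-1)}" by (rule step[OF cont _ _ _ s21 inX[of "(2,-1)"]]) (simp_all add: Xl_def c2_adj_def)
  have s31: "f (2,-1) \<in> {(-2,-1),(-1,-1),(0,-1),(1,-1),(2,-1)}" by (rule step[OF cont _ _ _ s24 s30]) (simp_all add: Xl_def c2_adj_def)
  have s32: "f (2,0) \<in> {(-3,0),(-2,-1),(-2,0),(-2,1),(-1,-1),(-1,0),(-1,1),(0,-1),(0,1),(1,-1),(1,0),(1,1),(2,-1),(2,0),(2,1)}" by (rule step[OF cont _ _ _ s24 inX[of "(2,0)"]]) (simp_all add: Xl_def c2_adj_def)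
  have s33: "f (2,0) \<in> {(-3,0),(-2,0),(-2,1),(-1,0),(-1,1),(0,1),(1,0),(1,1),(2,0),(2,1)}" by (rule step[OF cont _ _ _ s27 s32]) (simp_all add: Xl_def c2_adj_def)
  have s34: "f (2,0) \<in> {(-3,0),(-2,0),(-1,0),(1,0),(2,0)}" by (rule step[OF cont _ _ _ s31 s33]) (simp_all add: Xl_def c2_adj_def)
  have s35: "f (2,1) \<in> {(-2,1),(-1,1),(-1,2),(0,1),(0,2),(0,3),(1,1),(1,2),(2,1)}" by (rule step[OF cont _ _ _ s29 inX[of "(2,1)"]]) (simp_all add: Xl_def c2_adj_def)
  have s36: "f (2,1) \<in> {(-2,1),(-1,1),(0,1),(1,1),(2,1)}" by (rule step[OF cont _ _ _ s24 s35]) (simp_all add: Xl_def c2_adj_def)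
  have s37: "f (3,0) \<in> {(-3,0),(-2,-1),(-2,0),(-1,-2),(-1,-1),(-1,0),(0,-2),(0,-1),(1,-2),(1,-1),(1,0),(2,-1),(2,0),(3,0)}" by (rule step[OF cont _ _ _ s31 inX[of "(3,0)"]]) (simp_all add: Xl_def c2_adj_def)
  have s38: "f (3,0) \<in> {(-3,0),(-2,-1),(-2,0),(-1,-1),(-1,0),(0,-1),(1,-1),(1,0),(2,-1),(2,0),(3,0)}" by (rule step[OF cont _ _ _ s34 s37]) (simp_all add: Xl_def c2_adj_def)
  have s39: "f (3,0) \<in> {(-3,0),(-2,0),(-1,0),(1,0),(2,0),(3,0)}" by (rule step[OF cont _ _ _ s36 s38]) (simp_all add: Xl_def c2_adj_def)
  have s40: "f (4,0) \<in> {(-3,0),(-2,-1),(-2,0),(-2,1),(-1,-1),(-1,0),(-1,1),(0,-1),(0,1),(1,-1),(1,0),(1,1),(2,-1),(2,0),(2,1),(3,0),(4,0)}" by (rule step[OF cont _ _ _ s39 inX[of "(4,0)"]]) (simp_all add: Xl_def c2_adj_def)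
  have s41: "f (5,0) \<in> {(-3,0),(-2,-1),(-2,0),(-2,1),(-1,-2),(-1,-1),(-1,0),(-1,1),(-1,2),(0,-2),(0,-1),(0,1),(0,2),(1,-2),(1,-1),(1,0),(1,1),(1,2),(2,-1),(2,0),(2,1),(3,0),(4,0),(5,0)}" by (rule step[OF cont _ _ _ s40 inX[of "(5,0)"]]) (simp_all add: Xl_def c2_adj_def)
  have s42: "f (6,-1) \<in> {(-3,0),(-2,-1),(-2,0),(-2,1),(-1,-2),(-1,-1),(-1,0),(-1,1),(-1,2),(0,-3),(0,-2),(0,-1),(0,1),(0,2),(0,3),(1,-2),(1,-1),(1,0),(1,1),(1,2),(2,-1),(2,0),(2,1),(3,0),(4,0),(5,0),(6,-1),(6,0),(6,1)}" by (rule step[OF cont _ _ _ s41 inX[of "(6,-1)"]]) (simp_all add: Xl_def c2_adj_def)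
  have s43: "f (6,0) \<in> {(-3,0),(-2,-1),(-2,0),(-2,1),(-1,-2),(-1,-1),(-1,0),(-1,1),(-1,2),(0,-3),(0,-2),(0,-1),(0,1),(0,2),(0,3),(1,-2),(1,-1),(1,0),(1,1),(1,2),(2,-1),(2,0),(2,1),(3,0),(4,0),(5,0),(6,-1),(6,0),(6,1)}" by (rule step[OF cont _ _ _ s41 inX[of "(6,0)"]]) (simp_all add: Xl_def c2_adj_def)
  have s44: "f (6,1) \<in> {(-3,0),(-2,-1),(-2,0),(-2,1),(-1,-2),(-1,-1),(-1,0),(-1,1),(-1,2),(0,-3),(0,-2),(0,-1),(0,1),(0,2),(0,3),(1,-2),(1,-1),(1,0),(1,1),(1,2),(2,-1),(2,0),(2,1),(3,0),(4,0),(5,0),(6,-1),(6,0),(6,1)}" by (rule step[OF cont _ _ _ s41 inX[of "(6,1)"]]) (simp_all add: Xl_def c2_adj_def)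
  have s45: "f (7,-2) \<in> {(7,-2),(8,-3),(8,-2),(9,-2)}" by (rule step[OF cont _ _ _ fix3 inX[of "(7,-2)"]]) (simp_all add: Xl_def c2_adj_def)
  have s46: "f (7,-2) \<in> {(7,-2)}" by (rule step[OF cont _ _ _ s42 s45]) (simp_all add: Xl_def c2_adj_def)
  have s47: "f (7,-1) \<in> {(6,-1),(7,-2),(7,-1),(8,-3),(8,-2),(8,-1)}" by (rule step[OF cont _ _ _ s46 inX[of "(7,-1)"]]) (simp_all add: Xl_def c2_adj_def)
  have s48: "f (7,-1) \<in> {(6,-1),(7,-2),(7,-1)}" by (rule step[OF cont _ _ _ s42 s47]) (simp_all add: Xl_def c2_adj_def)
  have s49: "f (7,0) \<in> {(5,0),(6,-1),(6,0),(7,-2),(7,-1),(7,0),(8,-3),(8,-2),(8,-1)}" by (rule step[OF cont _ _ _ s48 inX[of "(7,0)"]]) (simp_all add: Xl_def c2_adj_def)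
  have s50: "f (7,0) \<in> {(5,0),(6,-1),(6,0),(7,-2),(7,-1),(7,0)}" by (rule step[OF cont _ _ _ s42 s49]) (simp_all add: Xl_def c2_adj_def)
  have s51: "f (7,1) \<in> {(4,0),(5,0),(6,-1),(6,0),(6,1),(7,-2),(7,-1),(7,0),(7,1),(8,-3),(8,-2),(8,-1),(8,1)}" by (rule step[OF cont _ _ _ s50 inX[of "(7,1)"]]) (simp_all add: Xl_def c2_adj_def)
  have s52: "f (7,1) \<in> {(4,0),(5,0),(6,-1),(6,0),(6,1),(7,-2),(7,-1),(7,0),(7,1)}" by (rule step[OF cont _ _ _ s43 s51]) (simp_all add: Xl_def c2_adj_def)
  have s53: "f (7,2) \<in> {(7,2),(8,2),(8,3),(9,2)}" by (rule step[OF cont _ _ _ fix4 inX[of "(7,2)"]]) (simp_all add: Xl_def c2_adj_def)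
  have s54: "f (7,2) \<in> {(7,2),(8,2)}" by (rule step[OF cont _ _ _ s52 s53]) (simp_all add: Xl_def c2_adj_def)
  have s55: "f (7,2) \<in> {(7,2)}" by (rule step[OF cont _ _ _ s44 s54]) (simp_all add: Xl_def c2_adj_def)
  have s56: "f (8,-2) \<in> {(6,-1),(7,-2),(7,-1),(8,-3),(8,-2),(8,-1)}" by (rule step[OF cont _ _ _ s46 inX[of "(8,-2)"]]) (simp_all add: Xl_def c2_adj_def)
  have s57: "f (8,-2) \<in> {(7,-2),(8,-3),(8,-2)}" by (rule step[OF cont _ _ _ fix3 s56]) (simp_all add: Xl_def c2_adj_def)
  have s58: "f (8,-2) \<in> {(8,-3),(8,-2)}" by (rule step[OF cont _ _ _ fix5 s57]) (simp_all add: Xl_def c2_adj_def)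
  have s59: "f (8,-2) \<in> {(8,-2)}" by (rule step[OF cont _ _ _ fix6 s58]) (simp_all add: Xl_def c2_adj_def)
  have s60: "f (8,-1) \<in> {(6,-1),(7,-2),(7,-1),(8,-3),(8,-2),(8,-1)}" by (rule step[OF cont _ _ _ s46 inX[of "(8,-1)"]]) (simp_all add: Xl_def c2_adj_def)
  have s61: "f (8,-1) \<in> {(7,-2),(7,-1),(8,-3),(8,-2),(8,-1)}" by (rule step[OF cont _ _ _ s59 s60]) (simp_all add: Xl_def c2_adj_def)
  have s62: "f (8,-1) \<in> {(8,-3),(8,-2),(8,-1)}" by (rule step[OF cont _ _ _ fix5 s61]) (simp_all add: Xl_def c2_adj_def)
  have s63: "f (8,-1) \<in> {(8,-2),(8,-1)}" by (rule step[OF cont _ _ _ fix6 s62]) (simp_all add: Xl_def c2_adj_def)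
  have s64: "f (8,1) \<in> {(6,1),(7,1),(7,2),(8,1),(8,2),(8,3)}" by (rule step[OF cont _ _ _ s55 inX[of "(8,1)"]]) (simp_all add: Xl_def c2_adj_def)
  have s65: "f (8,1) \<in> {(8,1),(8,2)}" by (rule step[OF cont _ _ _ fix7 s64]) (simp_all add: Xl_def c2_adj_def)
  have s66: "f (8,1) \<in> {(8,1)}" by (rule step[OF cont _ _ _ s50 s65]) (simp_all add: Xl_def c2_adj_def)
  have s67: "f (8,2) \<in> {(6,1),(7,1),(7,2),(8,1),(8,2),(8,3)}" by (rule step[OF cont _ _ _ s55 inX[of "(8,2)"]]) (simp_all add: Xl_def c2_adj_def)
  have s68: "f (8,2) \<in> {(7,1),(7,2),(8,1),(8,2)}" by (rule step[OF cont _ _ _ s66 s67]) (simp_all add: Xl_def c2_adj_def)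
  have s69: "f (8,2) \<in> {(7,2),(8,2)}" by (rule step[OF cont _ _ _ fix4 s68]) (simp_all add: Xl_def c2_adj_def)
  have s70: "f (8,2) \<in> {(8,2)}" by (rule step[OF cont _ _ _ fix7 s69]) (simp_all add: Xl_def c2_adj_def)
  have s71: "f (9,0) \<in> {(7,0),(7,1),(7,2),(8,1),(8,2),(9,0),(9,1),(9,2)}" by (rule step[OF cont _ _ _ s66 inX[of "(9,0)"]]) (simp_all add: Xl_def c2_adj_def)
  have s72: "f (9,0) \<in> {(9,0)}" by (rule step[OF cont _ _ _ fix6 s71]) (simp_all add: Xl_def c2_adj_def)
  have s73: "f (-2,-1) \<in> {(-2,-1)}" by (rule step[OF cont _ _ _ s4 s0]) (simp_all add: Xl_def c2_adj_def)
  have s74: "f (-2,0) \<in> {(-3,0),(-2,-1),(-2,0)}" by (rule step[OF cont _ _ _ s73 s1]) (simp_all add: Xl_def c2_adj_def)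
  have s75: "f (-2,1) \<in> {(-2,1)}" by (rule step[OF cont _ _ _ s12 s2]) (simp_all add: Xl_def c2_adj_def)
  have s76: "f (-1,0) \<in> {(-3,0),(-2,0),(-1,0)}" by (rule step[OF cont _ _ _ s75 s8]) (simp_all add: Xl_def c2_adj_def)
  have s77: "f (-1,1) \<in> {(-3,0),(-2,0),(-2,1),(-1,0),(-1,1)}" by (rule step[OF cont _ _ _ s75 s10]) (simp_all add: Xl_def c2_adj_def)
  have s78: "f (-1,1) \<in> {(-2,1),(-1,1)}" by (rule step[OF cont _ _ _ s12 s77]) (simp_all add: Xl_def c2_adj_def)
  have s79: "f (0,-1) \<in> {(-2,-1),(-1,-1),(0,-1)}" by (rule step[OF cont _ _ _ s76 s15]) (simp_all add: Xl_def c2_adj_def)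
  have s80: "f (1,-2) \<in> {(-1,-2),(0,-2),(1,-2)}" by (rule step[OF cont _ _ _ s79 s21]) (simp_all add: Xl_def c2_adj_def)
  have s81: "f (1,-1) \<in> {(-2,-1),(-1,-2),(-1,-1),(0,-2),(0,-1),(1,-2),(1,-1)}" by (rule step[OF cont _ _ _ s79 s22]) (simp_all add: Xl_def c2_adj_def)
  have s82: "f (1,-1) \<in> {(-2,-1),(-1,-1),(0,-1),(1,-1)}" by (rule step[OF cont _ _ _ s24 s81]) (simp_all add: Xl_def c2_adj_def)
  have s83: "f (6,-1) \<in> {(6,-1)}" by (rule step[OF cont _ _ _ s46 s42]) (simp_all add: Xl_def c2_adj_def)
  have s84: "f (6,0) \<in> {(5,0),(6,-1),(6,0)}" by (rule step[OF cont _ _ _ s83 s43]) (simp_all add: Xl_def c2_adj_def)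
  have s85: "f (6,1) \<in> {(6,1)}" by (rule step[OF cont _ _ _ s55 s44]) (simp_all add: Xl_def c2_adj_def)
  have s86: "f (7,-1) \<in> {(7,-2),(7,-1)}" by (rule step[OF cont _ _ _ s59 s48]) (simp_all add: Xl_def c2_adj_def)
  have s87: "f (7,0) \<in> {(5,0),(6,0),(7,0)}" by (rule step[OF cont _ _ _ s85 s50]) (simp_all add: Xl_def c2_adj_def)
  have s88: "f (7,0) \<in> {(7,0)}" by (rule step[OF cont _ _ _ s66 s87]) (simp_all add: Xl_def c2_adj_def)
  have s89: "f (7,1) \<in> {(5,0),(6,0),(6,1),(7,0),(7,1)}" by (rule step[OF cont _ _ _ s85 s52]) (simp_all add: Xl_def c2_adj_def)
  have s90: "f (7,1) \<in> {(6,0),(6,1),(7,0),(7,1)}" by (rule step[OF cont _ _ _ s88 s89]) (simp_all add: Xl_def c2_adj_def)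
  have s91: "f (7,1) \<in> {(6,1),(7,1)}" by (rule step[OF cont _ _ _ s55 s90]) (simp_all add: Xl_def c2_adj_def)
  have s92: "f (7,1) \<in> {(7,1)}" by (rule step[OF cont _ _ _ s66 s91]) (simp_all add: Xl_def c2_adj_def)
  have s93: "f (8,-1) \<in> {(8,-1)}" by (rule step[OF cont _ _ _ s88 s63]) (simp_all add: Xl_def c2_adj_def)
  have s94: "f (-2,0) \<in> {(-3,0),(-2,0)}" by (rule step[OF cont _ _ _ s75 s74]) (simp_all add: Xl_def c2_adj_def)
  have s95: "f (-1,-1) \<in> {(-2,-1),(-1,-1)}" by (rule step[OF cont _ _ _ s94 s6]) (simp_all add: Xl_def c2_adj_def)
  have s96: "f (0,-2) \<in> {(-1,-2),(0,-2)}" by (rule step[OF cont _ _ _ s95 s14]) (simp_all add: Xl_def c2_adj_def)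
  have s97: "f (5,0) \<in> {(5,0)}" by (rule step[OF cont _ _ _ s83 s41]) (simp_all add: Xl_def c2_adj_def)
  have s98: "f (6,0) \<in> {(5,0),(6,0)}" by (rule step[OF cont _ _ _ s85 s84]) (simp_all add: Xl_def c2_adj_def)
  have s99: "f (6,0) \<in> {(6,0)}" by (rule step[OF cont _ _ _ s88 s98]) (simp_all add: Xl_def c2_adj_def)
  have s100: "f (7,-1) \<in> {(7,-1)}" by (rule step[OF cont _ _ _ s99 s86]) (simp_all add: Xl_def c2_adj_def)
  have s101: "f (4,0) \<in> {(4,0)}" by (rule step[OF cont _ _ _ s97 s40]) (simp_all add: Xl_def c2_adj_def)
  have s102: "f (3,0) \<in> {(3,0)}" by (rule step[OF cont _ _ _ s101 s39]) (simp_all add: Xl_def c2_adj_def)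
  have s103: "f (2,-1) \<in> {(2,-1)}" by (rule step[OF cont _ _ _ s102 s31]) (simp_all add: Xl_def c2_adj_def)
  have s104: "f (2,0) \<in> {(1,0),(2,0)}" by (rule step[OF cont _ _ _ s103 s34]) (simp_all add: Xl_def c2_adj_def)
  have s105: "f (2,0) \<in> {(2,0)}" by (rule step[OF cont _ _ _ s102 s104]) (simp_all add: Xl_def c2_adj_def)
  have s106: "f (2,1) \<in> {(1,1),(2,1)}" by (rule step[OF cont _ _ _ s105 s36]) (simp_all add: Xl_def c2_adj_def)
  have s107: "f (2,1) \<in> {(2,1)}" by (rule step[OF cont _ _ _ s102 s106]) (simp_all add: Xl_def c2_adj_def)
  have s108: "f (1,-2) \<in> {(1,-2)}" by (rule step[OF cont _ _ _ s103 s80]) (simp_all add: Xl_def c2_adj_def)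
  have s109: "f (1,-1) \<in> {(0,-1),(1,-1)}" by (rule step[OF cont _ _ _ s108 s82]) (simp_all add: Xl_def c2_adj_def)
  have s110: "f (1,-1) \<in> {(1,-1)}" by (rule step[OF cont _ _ _ s103 s109]) (simp_all add: Xl_def c2_adj_def)
  have s111: "f (1,0) \<in> {(1,0)}" by (rule step[OF cont _ _ _ s110 s24]) (simp_all add: Xl_def c2_adj_def)
  have s112: "f (1,1) \<in> {(0,1),(1,1)}" by (rule step[OF cont _ _ _ s111 s27]) (simp_all add: Xl_def c2_adj_def)
  have s113: "f (1,1) \<in> {(1,1)}" by (rule step[OF cont _ _ _ s105 s112]) (simp_all add: Xl_def c2_adj_def)
  have s114: "f (1,2) \<in> {(0,2),(1,2)}" by (rule step[OF cont _ _ _ s113 s29]) (simp_all add: Xl_def c2_adj_def)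
  have s115: "f (1,2) \<in> {(1,2)}" by (rule step[OF cont _ _ _ s107 s114]) (simp_all add: Xl_def c2_adj_def)
  have s116: "f (0,-2) \<in> {(0,-2)}" by (rule step[OF cont _ _ _ s108 s96]) (simp_all add: Xl_def c2_adj_def)
  have s117: "f (0,-1) \<in> {(-1,-1),(0,-1)}" by (rule step[OF cont _ _ _ s116 s79]) (simp_all add: Xl_def c2_adj_def)
  have s118: "f (0,-1) \<in> {(0,-1)}" by (rule step[OF cont _ _ _ s108 s117]) (simp_all add: Xl_def c2_adj_def)
  have s119: "f (0,1) \<in> {(0,1)}" by (rule step[OF cont _ _ _ s111 s17]) (simp_all add: Xl_def c2_adj_def)
  have s120: "f (0,2) \<in> {(0,2)}" by (rule step[OF cont _ _ _ s113 s20]) (simp_all add: Xl_def c2_adj_def)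
  have s121: "f (-1,-1) \<in> {(-1,-1)}" by (rule step[OF cont _ _ _ s116 s95]) (simp_all add: Xl_def c2_adj_def)
  have s122: "f (-1,0) \<in> {(-2,0),(-1,0)}" by (rule step[OF cont _ _ _ s121 s76]) (simp_all add: Xl_def c2_adj_def)
  have s123: "f (-1,0) \<in> {(-1,0)}" by (rule step[OF cont _ _ _ s118 s122]) (simp_all add: Xl_def c2_adj_def)
  have s124: "f (-1,1) \<in> {(-1,1)}" by (rule step[OF cont _ _ _ s119 s78]) (simp_all add: Xl_def c2_adj_def)
  have s125: "f (-2,0) \<in> {(-2,0)}" by (rule step[OF cont _ _ _ s121 s94]) (simp_all add: Xl_def c2_adj_def)
  show "\<forall>x\<in>Xl. f x = x" unfolding Xl_def using fix0 fix1 fix2 fix3 fix4 fix5 fix6 fix7 fix8 s100 s101 s102 s103 s105 s107 s108 s110 s111 s113 s115 s116 s118 s119 s12 s120 s121 s123 s124 s125 s4 s46 s55 s59 s66 s70 s72 s73 s75 s83 s85 s88 s92 s93 s97 s99 by simp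
qed

lemma move:
  assumes "b \<in> X" "c \<in> X" "\<forall>y\<in>X. c2_adj b y \<longrightarrow> c = y \<or> c2_adj c y"
  shows "c2_continuous X (id(b:=c))"
  using assms unfolding c2_continuous_def c2_adj_def by (auto simp: abs_minus_commute)

lemma notfreeze:
  assumes "c2_continuous X g" "\<forall>a\<in>A. g a = a" "b \<in> X" "g b \<noteq> b"
  shows "\<not> freezing_set X A"
  using assms unfolding freezing_set_def by blast

theorem mainTheorem6:
  shows "minimal_freezing_set Xex
           {(-3,0),(0,-3),(0,3),(8,-3),(8,3),(9,-2),(9,-1),(9,1),(9,2)}"
  unfolding X_eq minimal_freezing_set_def
proof (intro conjI allI impI)
  show "freezing_set Xl {(-3,0),(0,-3),(0,3),(8,-3),(8,3),(9,-2),(9,-1),(9,1),(9,2)}"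
    unfolding freezing_set_def using freeze by (simp add: Xl_def)
next
  have m0: "c2_continuous Xl (id((-3,0) := (-2,0)))" by (rule move) (simp_all add: Xl_def c2_adj_def)
  have m1: "c2_continuous Xl (id((0,-3) := (0,-2)))" by (rule move) (simp_all add: Xl_def c2_adj_def)
  have m2: "c2_continuous Xl (id((0,3) := (0,2)))" by (rule move) (simp_all add: Xl_def c2_adj_def)
  have m3: "c2_continuous Xl (id((8,-3) := (8,-2)))" by (rule move) (simp_all add: Xl_def c2_adj_def)
  have m4: "c2_continuous Xl (id((8,3) := (8,2)))" by (rule move) (simp_all add: Xl_def c2_adj_def)
  have m5: "c2_continuous Xl (id((9,-2) := (8,-2)))" by (rule move) (simp_all add: Xl_def c2_adj_def)
  have m6: "c2_continuous Xl (id((9,-1) := (8,-1)))" by (rule move) (simp_all add: Xl_def c2_adj_def)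
  have m7: "c2_continuous Xl (id((9,1) := (8,1)))" by (rule move) (simp_all add: Xl_def c2_adj_def)
  have m8: "c2_continuous Xl (id((9,2) := (8,2)))" by (rule move) (simp_all add: Xl_def c2_adj_def)
  fix C :: "pt set" assume CB: "C \<subset> {(-3,0),(0,-3),(0,3),(8,-3),(8,3),(9,-2),(9,-1),(9,1),(9,2)}"
  then obtain b where bB: "b \<in> {(-3,0),(0,-3),(0,3),(8,-3),(8,3),(9,-2),(9,-1),(9,1),(9,2)}" and bC: "b \<notin> C" by blast
  show "\<not> freezing_set Xl C"
    using bB
  proof (elim insertE emptyE)
    assume "b = (-3,0)"
      thus ?thesis using bC by (intro notfreeze[OF m0, of C "(-3,0)"]) (auto simp: Xl_def)
    next assume "b = (0,-3)"
      thus ?thesis using bC by (intro notfreeze[OF m1, of C "(0,-3)"]) (auto simp: Xl_def)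
    next assume "b = (0,3)"
      thus ?thesis using bC by (intro notfreeze[OF m2, of C "(0,3)"]) (auto simp: Xl_def)
    next assume "b = (8,-3)"
      thus ?thesis using bC by (intro notfreeze[OF m3, of C "(8,-3)"]) (auto simp: Xl_def)
    next assume "b = (8,3)"
      thus ?thesis using bC by (intro notfreeze[OF m4, of C "(8,3)"]) (auto simp: Xl_def)
    next assume "b = (9,-2)"
      thus ?thesis using bC by (intro notfreeze[OF m5, of C "(9,-2)"]) (auto simp: Xl_def)
    next assume "b = (9,-1)"
      thus ?thesis using bC by (intro notfreeze[OF m6, of C "(9,-1)"]) (auto simp: Xl_def)
    next assume "b = (9,1)"
      thus ?thesis using bC by (intro notfreeze[OF m7, of C "(9,1)"]) (auto simp: Xl_def)
    next assume "b = (9,2)"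
      thus ?thesis using bC by (intro notfreeze[OF m8, of C "(9,2)"]) (auto simp: Xl_def)
  qed
qed

end
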